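(* Let $\lambda$ be a dominant integral weight of $\mathfrak{sl}_{r+1}$ and $b\in\mathcal B(\lambda+\rho)$. For $1\le j\le i\le r$, the entry $a_{i,j}$ of the BZL path $\psi_{\mathbf i}(b)$ is circled by rule (C-I) if and only if the corresponding entry $\mathbf a_{i-j+1,i}$ of $\mathbf a(b)$ is circled by rule (C-II).
   Context: Fix $r\ge1$ and $\mathfrak g=\mathfrak{sl}_{r+1}$ with index set $I=\{1,\dots,r\}$, simple roots $\alpha_1,\dots,\alpha_r$, fundamental weights $\omega_1,\dots,\omega_r$, $N=r(r+1)/2$, and $\rho=\sum_i\omega_i$. For a dominant integral weight $\mu=\sum_i m_i\omega_i$, $\mathcal B(\mu)$ is identified (Kashiwara–Nakashima) with the set of semistandard Young tableaux with entries in $\{1,\dots,r+1\}$ of the shape having $m_i$ columns of height $i$; an entry equal to $k$ is a $k$-box. A tableau is identified with the tensor product of its entries read column by column from right to left, each column top to bottom, and $\tilde e_i,\tilde f_i$ act by the signature rule: for each factor write $-$ if it equals $i+1$, $+$ if it equals $i$; repeatedly cancel adjacent $+-$ pairs; $\tilde e_i$ changes the factor of the rightmost remaining $-$ from $i+1$ to $i$ (giving $0$ if none), $\tilde f_i$ changes the factor of the leftmost remaining $+$ from $i$ to $i+1$ (giving $0$ if none). Fix the long word $\mathbf i=(i_1,\dots,i_N)=(1,2,1,3,2,1,\dots,r,\dots,2,1)$. The BZL path $\psi_{\mathbf i}(b)=(a_1,\dots,a_N)$: $a_k$ is maximal with $\tilde e_{i_k}^{a_k}\cdots\tilde e_{i_1}^{a_1}b\ne0$.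 Triangular form: $a_{i,j}=a_{i(i-1)/2+j}$ for $1\le j\le i\le r$. Rule (C-I): circle $a_{i,j}$ if $a_{i,j}=a_{i,j+1}$, with the convention $a_{i,i+1}=0$. For $1\le i\le j\le r$, $\mathbf a_{i,j}$ is the number of $(j+1)$-boxes in rows $1$ through $i$ of $b$, with convention $\mathbf a_{0,j}=0$; $\mathbf a(b)=(\mathbf a_{i,j})$. Rule (C-II): circle $\mathbf a_{i,j}$ if $\mathbf a_{i,j}=\mathbf a_{i-1,j}$. *)

theory Defs
  imports Main
begin

text \<open>A tableau is a list of columns, ordered left to right; each column is the
list of its entries from top to bottom. For a dominant weight with coefficients
m k (k = 1..r), the shape has m k columns of height k, the tallest columns
being on the left.\<close>

definition col_heights :: "nat \<Rightarrow> (nat \<Rightarrow> nat) \<Rightarrow> nat list" where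
  "col_heights r m = concat (map (\<lambda>k. replicate (m k) k) (rev [1..<r+1]))"

definition SSYT :: "nat \<Rightarrow> (nat \<Rightarrow> nat) \<Rightarrow> nat list list set" where
  "SSYT r m = {T. map length T = col_heights r m
      \<and> (\<forall>c\<in>set T. \<forall>x\<in>set c. 1 \<le> x \<and> x \<le> r + 1)
      \<and> (\<forall>c\<in>set T. sorted_wrt (<) c)
      \<and> (\<forall>p. Suc p < length T \<longrightarrow>
            (\<forall>k < length (T ! Suc p). T ! p ! k \<le> T ! Suc p ! k))}"

definition read_word :: "nat list list \<Rightarrow> nat list" where
  "read_word T = concat (rev T)"

fun refill :: "nat list \<Rightarrow> 'a list \<Rightarrow> 'a list list" where
  "refill [] w = []"
| "refill (n # ns) w = take n w # refill ns (drop n w)"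

text \<open>Inverse of the reading word for a fixed shape.\<close>
definition unread :: "nat list list \<Rightarrow> nat list \<Rightarrow> nat list list" where
  "unread T w = rev (refill (map length (rev T)) w)"

datatype sgn = Plus | Minus

definition signature :: "nat \<Rightarrow> nat list \<Rightarrow> (nat \<times> sgn) list" where
  "signature i w = map (\<lambda>p. (p, if w ! p = i then Plus else Minus))
      (filter (\<lambda>p. w ! p = i \<or> w ! p = i + 1) [0..<length w])"

text \<open>Cancellation of adjacent (+,-) pairs (+ to the left of -), performed
with a stack (the result does not depend on the cancellation order).\<close>
fun reduce_aux :: "(nat \<times> sgn) list \<Rightarrow> (nat \<times> sgn) list \<Rightarrow> (nat \<times> sgn) list" where
  "reduce_aux [] st = rev st"
| "reduce_aux ((p, Minus) # xs) ((q, Plus) # st) = reduce_aux xs st"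
| "reduce_aux (x # xs) st = reduce_aux xs (x # st)"

definition reduced_sig :: "nat \<Rightarrow> nat list \<Rightarrow> (nat \<times> sgn) list" where
  "reduced_sig i w = reduce_aux (signature i w) []"

text \<open>Kashiwara operator e_i on words: change the rightmost remaining - from
i+1 to i; None (= 0) if there is none.\<close>
definition e_word :: "nat \<Rightarrow> nat list \<Rightarrow> nat list option" where
  "e_word i w = (let ps = map fst (filter (\<lambda>x. snd x = Minus) (reduced_sig i w)) in
     if ps = [] then None else Some (w[last ps := i]))"

definition e_tab :: "nat \<Rightarrow> nat list list \<Rightarrow> nat list list option" where
  "e_tab i T = map_option (unread T) (e_word i (read_word T))"

definition e_pow :: "nat \<Rightarrow> nat \<Rightarrow> nat list list \<Rightarrow> nat list list option" where
  "e_pow i n T = ((\<lambda>x. Option.bind x (e_tab i)) ^^ n) (Some T)"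

definition eps :: "nat \<Rightarrow> nat list list \<Rightarrow> nat" where
  "eps i T = (GREATEST a. e_pow i a T \<noteq> None)"

fun bzl_aux :: "nat list \<Rightarrow> nat list list \<Rightarrow> nat list" where
  "bzl_aux [] T = []"
| "bzl_aux (i # is) T = (let a = eps i T in a # bzl_aux is (the (e_pow i a T)))"

definition long_word :: "nat \<Rightarrow> nat list" where
  "long_word r = concat (map (\<lambda>k. rev [1..<k+1]) [1..<r+1])"

definition bzl :: "nat \<Rightarrow> nat list list \<Rightarrow> nat list" where
  "bzl r T = bzl_aux (long_word r) T"

text \<open>Triangular entry a_{i,j} = a_{i(i-1)/2+j} (1-indexed).\<close>
definition bzl_entry :: "nat \<Rightarrow> nat list list \<Rightarrow> nat \<Rightarrow> nat \<Rightarrow> nat" where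
  "bzl_entry r T i j = bzl r T ! (i * (i - 1) div 2 + j - 1)"

text \<open>Rule (C-I), with the convention a_{i,i+1} = 0.\<close>
definition circled_CI :: "nat \<Rightarrow> nat list list \<Rightarrow> nat \<Rightarrow> nat \<Rightarrow> bool" where
  "circled_CI r T i j = (bzl_entry r T i j = (if j = i then 0 else bzl_entry r T i (j + 1)))"

text \<open>bold a_{i,j}: number of (j+1)-boxes in rows 1..i (so bold a_{0,j} = 0).\<close>
definition bold_a :: "nat list list \<Rightarrow> nat \<Rightarrow> nat \<Rightarrow> nat" where
  "bold_a T i j = sum_list (map (\<lambda>c. length (filter (\<lambda>x. x = j + 1) (take i c))) T)"

definition circled_CII :: "nat list list \<Rightarrow> nat \<Rightarrow> nat \<Rightarrow> bool" where
  "circled_CII T i j = (bold_a T i j = bold_a T (i - 1) j)"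

end

theory Submission
  imports Defs
begin


lemma sig_append:
  "signature i (xs @ ys) = signature i xs @ map (\<lambda>(p,s). (p + length xs, s)) (signature i ys)"
proof -
  have u: "[0..<length (xs@ys)] = [0..<length xs] @ map (\<lambda>p. p + length xs) [0..<length ys]"
    using upt_add_eq_append[of 0 "length xs" "length ys"] by (simp add: map_add_upt add.commute)
  have a: "filter (\<lambda>p. (xs@ys) ! p = i \<or> (xs@ys) ! p = i + 1) [0..<length xs]
     = filter (\<lambda>p. xs ! p = i \<or> xs ! p = i + 1) [0..<length xs]"
    by (rule filter_cong) (auto simp: nth_append)
  have b: "filter (\<lambda>p. (xs@ys) ! p = i \<or> (xs@ys) ! p = i + 1) (map (\<lambda>p. p + length xs) [0..<length ys])
     = map (\<lambda>p. p + length xs) (filter (\<lambda>p. ys ! p = i \<or> ys ! p = i + 1) [0..<length ys])"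
    by (simp add: filter_map o_def nth_append)
  show ?thesis
    unfolding signature_def u filter_append a b
    by (auto simp: nth_append)
qed

lemma sig_nil: "(\<forall>x\<in>set xs. x \<noteq> i \<and> x \<noteq> Suc i) \<Longrightarrow> signature i xs = []"
  unfolding signature_def by (auto simp: filter_empty_conv)

lemma sig_single: "signature i [x] = (if x = i then [(0,Plus)] else if x = Suc i then [(0,Minus)] else [])"
  unfolding signature_def by simp

lemma sig_cons: "signature i (x # xs) = (if x = i then [(0,Plus)] else if x = Suc i then [(0,Minus)] else [])
   @ map (\<lambda>(p,s). (p + 1, s)) (signature i xs)"
  using sig_append[of i "[x]" xs] by (simp add: sig_single)

fun good :: "(nat \<times> sgn) list \<Rightarrow> bool" where
  "good [] = True"
| "good ((p, Minus) # xs) = False"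
| "good ((p, Plus) # (q, Minus) # xs) = good xs"
| "good ((p, Plus) # xs) = good xs"

lemma good_shift: "good (map (\<lambda>(p,s). (p + n, s)) xs) = good xs"
  by (induction xs rule: good.induct) auto

lemma good_shift_Suc: "good (map (\<lambda>(p,s). (Suc p, s)) xs) = good xs"
  by (induction xs rule: good.induct) auto

lemma good_cons_plus: "good ys \<Longrightarrow> good ((p,Plus) # ys)"
  by (cases ys rule: good.cases) auto

lemma good_append: "good xs \<Longrightarrow> good ys \<Longrightarrow> good (xs @ ys)"
  by (induction xs rule: good.induct) (auto intro: good_cons_plus)

lemma good_plus: "\<forall>x\<in>set xs. snd x = Plus \<Longrightarrow> good xs"
  by (induction xs rule: good.induct) (auto intro: good_cons_plus)

lemma reduce_good: "good ys \<Longrightarrow>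
  filter (\<lambda>x. snd x = Minus) (reduce_aux ys st) = filter (\<lambda>x. snd x = Minus) (rev st)"
  by (induction ys arbitrary: st rule: good.induct) auto

lemma reduce_minus: "\<forall>x\<in>set ms. snd x = Minus \<Longrightarrow> (st = [] \<or> snd (hd st) = Minus) \<Longrightarrow>
  reduce_aux (ms @ ys) st = reduce_aux ys (rev ms @ st)"
proof (induction ms arbitrary: st)
  case Nil then show ?case by simp
next
  case (Cons m ms)
  obtain p s where m: "m = (p,s)" by force
  note pr = Cons.prems and ih = Cons.IH
  have s: "s = Minus" using pr(1) m by auto
  have "reduce_aux ((p,Minus) # (ms @ ys)) st = reduce_aux (ms @ ys) ((p,Minus) # st)"
  proof (cases st)
    case Nil then show ?thesis by simp
  next
    case (Cons a st')
    with pr(2) obtain q where "a = (q, Minus)" by (cases a) auto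
    then show ?thesis using Cons by simp
  qed
  also have "\<dots> = reduce_aux ys (rev ms @ (p,Minus) # st)"
    using ih[of "(p,Minus)#st"] pr(1) by simp
  finally have calc: "reduce_aux ((p, Minus) # ms @ ys) st = reduce_aux ys (rev ms @ (p, Minus) # st)" .
  have e1: "(m # ms) @ ys = (p,Minus) # (ms @ ys)" using m s by simp
  have e2: "rev (m # ms) @ st = rev ms @ (p,Minus) # st" using m s by simp
  show ?case unfolding e1 e2 by (rule calc)
qed

lemma sig_minus: "k \<notin> set u \<Longrightarrow> \<forall>x\<in>set (signature k u). snd x = Minus"
  unfolding signature_def by auto

lemma sig_plus: "Suc k \<notin> set u \<Longrightarrow> \<forall>x\<in>set (signature k u). snd x = Plus"
  unfolding signature_def by (auto, metis nth_mem)

lemma ew_None: "good (signature k v) \<Longrightarrow> e_word k v = None"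
  unfolding e_word_def reduced_sig_def Let_def using reduce_good[of "signature k v" "[]"] by simp

lemma ew_Some: assumes "k \<notin> set a" "good (signature k v)"
  shows "e_word k (a @ Suc k # v) = Some (a @ k # v)"
proof -
  define ms where "ms = signature k a @ [(length a, Minus)]"
  define ys where "ys = map (\<lambda>(p,s). (p + length a, s)) (map (\<lambda>(p,s). (p+1, s)) (signature k v))"
  have sig: "signature k (a @ Suc k # v) = ms @ ys"
    unfolding ms_def ys_def by (simp add: sig_append sig_cons)
  have msm: "\<forall>x\<in>set ms. snd x = Minus" using sig_minus[OF assms(1)] unfolding ms_def by auto
  have gy: "good ys" unfolding ys_def good_shift using assms(2) .
  have "filter (\<lambda>x. snd x = Minus) (reduced_sig k (a @ Suc k # v)) = ms"
    unfolding reduced_sig_def sig reduce_minus[OF msm, of "[]", simplified] reduce_good[OF gy]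
    using msm by simp
  then have "map fst (filter (\<lambda>x. snd x = Minus) (reduced_sig k (a @ Suc k # v))) = map fst (signature k a) @ [length a]"
    unfolding ms_def by simp
  then show ?thesis unfolding e_word_def Let_def by (simp add: list_update_append)
qed

definition ew :: "nat \<Rightarrow> nat \<Rightarrow> nat list \<Rightarrow> nat list option" where
  "ew k n w = ((\<lambda>x. Option.bind x (e_word k)) ^^ n) (Some w)"

lemma ew_0[simp]: "ew k 0 w = Some w" unfolding ew_def by simp

lemma ew_Suc2: "ew k (Suc n) w = Option.bind (ew k n w) (e_word k)"
  unfolding ew_def by simp

lemma ew_Suc: "e_word k w = Some w' \<Longrightarrow> ew k (Suc n) w = ew k n w'"
  unfolding ew_def by (simp only: funpow_Suc_right o_def) simp

lemma ew_none_mono: "ew k n w = None \<Longrightarrow> n \<le> m \<Longrightarrow> ew k m w = None"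
proof (induction m)
  case 0 then show ?case by simp
next
  case (Suc m) then show ?case
    by (cases "n = Suc m") (auto simp: ew_Suc2)
qed

lemma wstar: "k \<notin> set u \<Longrightarrow> good (signature k v) \<Longrightarrow>
  ew k (length (filter (\<lambda>x. x = Suc k) u)) (u @ v) = Some (map (\<lambda>x. if x = Suc k then k else x) u @ v)"
proof (induction u arbitrary: v rule: rev_induct)
  case Nil then show ?case by simp
next
  case (snoc x u)
  show ?case
  proof (cases "x = Suc k")
    case True
    have ku: "k \<notin> set u" using snoc.prems by simp
    have g: "good (signature k (k # v))" using snoc.prems(2)
      by (simp add: sig_cons good_shift_Suc good_cons_plus)
    have "ew k (length (filter (\<lambda>x. x = Suc k) (u @ [x]))) ((u @ [x]) @ v)
       = ew k (Suc (length (filter (\<lambda>x. x = Suc k) u))) (u @ Suc k # v)"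
      using True by simp
    also have "\<dots> = ew k (length (filter (\<lambda>x. x = Suc k) u)) (u @ k # v)"
      by (rule ew_Suc[OF ew_Some[OF ku snoc.prems(2)]])
    also have "\<dots> = Some (map (\<lambda>x. if x = Suc k then k else x) u @ k # v)"
      using snoc.IH[OF ku g] by simp
    finally show ?thesis using True by simp
  next
    case False
    have ku: "k \<notin> set u" and xk: "x \<noteq> k" using snoc.prems by auto
    have g: "good (signature k (x # v))" using snoc.prems(2) False xk
      by (simp add: sig_cons good_shift_Suc)
    show ?thesis using snoc.IH[OF ku g] False by simp
  qed
qed

lemma wstar_none: "k \<notin> set u \<Longrightarrow> good (signature k v) \<Longrightarrow>
  ew k (Suc (length (filter (\<lambda>x. x = Suc k) u))) (u @ v) = None"
proof -
  assume a: "k \<notin> set u" "good (signature k v)"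
  have "good (signature k (map (\<lambda>x. if x = Suc k then k else x) u @ v))"
    unfolding sig_append
    by (rule good_append[OF good_plus], rule sig_plus, auto simp: good_shift a(2))
  then show ?thesis unfolding ew_Suc2 wstar[OF a] by (simp add: ew_None)
qed



lemma refill_props: "sum_list ns = length w \<Longrightarrow> map length (refill ns w) = ns \<and> concat (refill ns w) = w"
proof (induction ns arbitrary: w)
  case Nil then show ?case by simp
next
  case (Cons n ns)
  then have "sum_list ns = length (drop n w)" by simp
  from Cons.IH[OF this] Cons.prems show ?case by simp
qed

lemma refill_concat: "refill (map length xs) (concat xs) = xs"
  by (induction xs) auto

lemma len_read: "length (read_word S) = sum_list (map length S)"
  unfolding read_word_def by (simp add: length_concat rev_map[symmetric] sum_list_rev)

lemma read_unread: assumes "length w = length (read_word S)"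
  shows "read_word (unread S w) = w" "map length (unread S w) = map length S"
proof -
  have "sum_list (map length (rev S)) = length w" using assms len_read[of S]
    by (simp add: rev_map[symmetric] sum_list_rev)
  from refill_props[OF this] show "read_word (unread S w) = w" "map length (unread S w) = map length S"
    unfolding unread_def read_word_def by (simp_all add: rev_map[symmetric])
qed

lemma unread_cong: "map length S' = map length S \<Longrightarrow> unread S' = unread S"
  unfolding unread_def by (simp add: rev_map[symmetric])

lemma unread_read: "map length S' = map length S \<Longrightarrow> unread S (read_word S') = S'"
proof -
  assume a: "map length S' = map length S"
  have "unread S (read_word S') = unread S' (read_word S')" using unread_cong[OF a] by simp
  also have "\<dots> = S'" unfolding unread_def read_word_def
    using refill_concat[of "rev S'"] by simp
  finally show ?thesis .
qed

lemma e_word_len: "e_word k w = Some w' \<Longrightarrow> length w' = length w"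
  unfolding e_word_def Let_def by (auto split: if_splits)

lemma ew_len: "ew k n w = Some w' \<Longrightarrow> length w' = length w"
proof (induction n arbitrary: w')
  case 0 then show ?case by simp
next
  case (Suc n)
  then obtain w1 where "ew k n w = Some w1" "e_word k w1 = Some w'" by (auto simp: ew_Suc2 bind_eq_Some_conv)
  then show ?case using Suc.IH e_word_len by metis
qed

lemma e_pow_ew: "e_pow k n S = map_option (unread S) (ew k n (read_word S))"
proof (induction n)
  case 0 then show ?case by (simp add: e_pow_def unread_read)
next
  case (Suc n)
  have ep: "e_pow k (Suc n) S = Option.bind (e_pow k n S) (e_tab k)" unfolding e_pow_def by simp
  show ?case
  proof (cases "ew k n (read_word S)")
    case None then show ?thesis using ep Suc by (simp add: ew_Suc2)
  next
    case (Some w')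
    have l: "length w' = length (read_word S)" using ew_len[OF Some] .
    have "e_tab k (unread S w') = map_option (unread S) (e_word k w')"
      unfolding e_tab_def read_unread[OF l] unread_cong[OF read_unread(2)[OF l]] ..
    then show ?thesis using ep Suc Some by (simp add: ew_Suc2)
  qed
qed

lemma eps_char: assumes "ew k p (read_word S) = Some w" "ew k (Suc p) (read_word S) = None"
  shows "eps k S = p" "e_pow k p S = Some (unread S w)"
proof -
  have "(GREATEST a. e_pow k a S \<noteq> None) = p"
  proof (rule Greatest_equality)
    show "e_pow k p S \<noteq> None" using assms(1) by (simp add: e_pow_ew)
  next
    fix y assume "e_pow k y S \<noteq> None"
    then have "ew k y (read_word S) \<noteq> None" by (simp add: e_pow_ew)
    then show "y \<le> p" using ew_none_mono[OF assms(2), of y] by (cases "y \<le> p") auto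
  qed
  then show "eps k S = p" unfolding eps_def .
  show "e_pow k p S = Some (unread S w)" using assms(1) by (simp add: e_pow_ew)
qed

lemma step_abstract:
  assumes "read_word S = u @ v" "k \<notin> set u" "good (signature k v)"
    and "map length S' = map length S"
    and "read_word S' = map (\<lambda>x. if x = Suc k then k else x) u @ v"
  shows "eps k S = length (filter (\<lambda>x. x = Suc k) u)" "the (e_pow k (eps k S) S) = S'"
proof -
  note a = wstar[OF assms(2,3)] wstar_none[OF assms(2,3)]
  note e = eps_char[of k _ S, unfolded assms(1), OF a]
  show "eps k S = length (filter (\<lambda>x. x = Suc k) u)" using e(1) .
  show "the (e_pow k (eps k S) S) = S'" unfolding e
    using unread_read[OF assms(4)] assms(5) by simp
qed



definition val :: "nat \<Rightarrow> nat \<Rightarrow> nat \<Rightarrow> nat \<Rightarrow> nat" where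
  "val i c m x = (if x \<le> i then m else if x = Suc i then max m c else x)"

definition gcol :: "nat \<Rightarrow> nat \<Rightarrow> nat list \<Rightarrow> nat list" where
  "gcol i c col = map (\<lambda>p. val i c (Suc p) (col ! p)) [0..<length col]"

lemma gcol_len[simp]: "length (gcol i c col) = length col"
  unfolding gcol_def by simp

lemma gcol_nth[simp]: "p < length col \<Longrightarrow> gcol i c col ! p = val i c (Suc p) (col ! p)"
  unfolding gcol_def by simp

lemma colR:
  assumes s: "sorted_wrt (<) col" and np: "\<not> (k \<le> length col \<and> col ! (k - 1) \<le> i)"
    and k: "1 \<le> k" "k \<le> i"
  shows "k \<notin> set (gcol i (Suc k) col)"
    "length (filter (\<lambda>x. x = Suc k) (gcol i (Suc k) col)) = length (filter (\<lambda>x. x = i + 1) (take k col))"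
    "map (\<lambda>x. if x = Suc k then k else x) (gcol i (Suc k) col) = gcol i k col"
proof -
  have H2: "Suc i \<le> col ! p" if "p < length col" "p = k - 1" for p
    using np that k by auto
  have H1: "Suc (Suc i) \<le> col ! p" if "p < length col" "k \<le> p" for p
  proof -
    have "Suc i \<le> col ! (k - 1)" using H2[of "k-1"] that k by auto
    moreover have "col ! (k - 1) < col ! p" using sorted_wrt_nth_less[OF s, of "k-1" p] that k by auto
    ultimately show ?thesis by simp
  qed
  show "k \<notin> set (gcol i (Suc k) col)"
  proof
    assume "k \<in> set (gcol i (Suc k) col)"
    then obtain p where p: "p < length col" "val i (Suc k) (Suc p) (col ! p) = k"
      by (auto simp: in_set_conv_nth)
    show False
    proof (cases "k \<le> p")
      case True then show False using H1[OF p(1) True] p(2) k by (auto simp: val_def split: if_splits)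
    next
      case False then show False using H2[OF p(1)] p(2) k by (auto simp: val_def split: if_splits)
    qed
  qed
  have pw: "(p < length col \<and> val i (Suc k) (Suc p) (col ! p) = Suc k) \<longleftrightarrow> (p < k \<and> p < length col \<and> col ! p = Suc i)" for p
  proof (cases "p < length col")
    case p: True
    show ?thesis
    proof (cases "k \<le> p")
      case True then show ?thesis using H1[OF p True] p k by (auto simp: val_def)
    next
      case False then show ?thesis using p k by (auto simp: val_def)
    qed
  qed simp
  have eqs: "{p. p < length (gcol i (Suc k) col) \<and> gcol i (Suc k) col ! p = Suc k}
     = {p. p < length (take k col) \<and> take k col ! p = i + 1}"
  proof (rule Collect_cong)
    fix p
    show "(p < length (gcol i (Suc k) col) \<and> gcol i (Suc k) col ! p = Suc k) \<longleftrightarrow> (p < length (take k col) \<and> take k col ! p = i + 1)"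
    proof (cases "p < length col")
      case True
      then show ?thesis using pw[of p] by (auto simp: nth_take)
    qed simp
  qed
  show "length (filter (\<lambda>x. x = Suc k) (gcol i (Suc k) col)) = length (filter (\<lambda>x. x = i + 1) (take k col))"
    unfolding length_filter_conv_card eqs ..
  show "map (\<lambda>x. if x = Suc k then k else x) (gcol i (Suc k) col) = gcol i k col"
  proof (rule nth_equalityI)
    fix p assume "p < length (map (\<lambda>x. if x = Suc k then k else x) (gcol i (Suc k) col))"
    then have p: "p < length col" by simp
    show "map (\<lambda>x. if x = Suc k then k else x) (gcol i (Suc k) col) ! p = gcol i k col ! p"
    proof (cases "k \<le> p")
      case True then show ?thesis using H1[OF p True] p k by (auto simp: val_def)
    next
      case False then show ?thesis using H2[OF p] p k by (auto simp: val_def)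
    qed
  qed simp
qed

lemma colL:
  assumes s: "sorted_wrt (<) col" and pr: "k \<le> length col" "col ! (k - 1) \<le> i"
    and k: "1 \<le> k" "k \<le> i"
  shows "gcol i (Suc k) col = gcol i k col"
    "length (filter (\<lambda>x. x = i + 1) (take k col)) = 0"
    "good (signature k (gcol i (Suc k) col))"
proof -
  have H3: "col ! p \<le> i" if "p < k" for p
  proof (cases "p = k - 1")
    case True then show ?thesis using pr by simp
  next
    case False
    then have "col ! p < col ! (k - 1)" using sorted_wrt_nth_less[OF s, of p "k-1"] that pr k by auto
    then show ?thesis using pr by simp
  qed
  show "gcol i (Suc k) col = gcol i k col"
  proof (rule nth_equalityI)
    fix p assume "p < length (gcol i (Suc k) col)"
    then have p: "p < length col" by simp
    show "gcol i (Suc k) col ! p = gcol i k col ! p"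
    proof (cases "k \<le> p")
      case True then show ?thesis using p by (auto simp: val_def)
    next
      case False then show ?thesis using H3[of p] p by (auto simp: val_def)
    qed
  qed simp
  show "length (filter (\<lambda>x. x = i + 1) (take k col)) = 0"
  proof -
    have "\<forall>x\<in>set (take k col). x \<noteq> i + 1"
    proof
      fix x assume "x \<in> set (take k col)"
      then obtain p where "p < k" "p < length col" "x = col ! p" by (auto simp: in_set_conv_nth)
      then show "x \<noteq> i + 1" using H3[of p] by simp
    qed
    then show ?thesis by (simp add: filter_empty_conv)
  qed
  define w where "w = gcol i (Suc k) col"
  have lw: "length w = length col" unfolding w_def by simp
  have kl: "k - 1 < length w" using pr k lw by simp
  have sk: "Suc (k - 1) = k" using k by simp
  have wsplit: "w = take (k - 1) w @ w ! (k - 1) # drop k w"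
    using id_take_nth_drop[OF kl] unfolding sk .
  have wk: "w ! (k - 1) = k" unfolding w_def using pr k by (simp add: val_def)
  have s1: "signature k (take (k - 1) w) = []"
  proof (rule sig_nil, intro ballI)
    fix x assume "x \<in> set (take (k - 1) w)"
    then obtain p where p: "p < k - 1" "p < length col" "x = w ! p" using lw by (auto simp: in_set_conv_nth)
    then have "x = Suc p" unfolding w_def using H3[of p] by (simp add: val_def)
    then show "x \<noteq> k \<and> x \<noteq> Suc k" using p(1) by linarith
  qed
  have s3: "signature k (drop (Suc k) w) = []"
  proof (rule sig_nil, intro ballI)
    fix x assume "x \<in> set (drop (Suc k) w)"
    then obtain q where q: "q < length w - Suc k" "x = w ! (Suc k + q)"
      by (auto simp: in_set_conv_nth)
    define p where "p = Suc k + q"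
    have p: "Suc k \<le> p" "p < length col" "x = w ! p" using q lw unfolding p_def by auto
    then have "x = val i (Suc k) (Suc p) (col ! p)" unfolding w_def by simp
    then show "x \<noteq> k \<and> x \<noteq> Suc k" using p k by (auto simp: val_def)
  qed
  have s2: "\<exists>Y. signature k (drop k w) = Y \<and> (Y = [] \<or> Y = [(0, Minus)])"
  proof (cases "k < length w")
    case False then show ?thesis by (simp add: signature_def)
  next
    case True
    then have d: "drop k w = w ! k # drop (Suc k) w" by (simp add: Cons_nth_drop_Suc)
    have "w ! k \<noteq> k" unfolding w_def using True lw k by (auto simp: val_def)
    then show ?thesis unfolding d sig_cons s3 by auto
  qed
  then obtain Y where Y: "signature k (drop k w) = Y" "Y = [] \<or> Y = [(0, Minus)]" by blast
  have "signature k w = map (\<lambda>(p,s). (p + length (take (k - 1) w), s)) ((0, Plus) # map (\<lambda>(p,s). (p + 1, s)) Y)"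
  proof -
    have e: "signature k w = signature k (take (k - 1) w) @ map (\<lambda>(p,s). (p + length (take (k - 1) w), s)) (signature k (w ! (k - 1) # drop k w))"
    proof -
      have "signature k w = signature k (take (k - 1) w @ w ! (k - 1) # drop k w)"
        using wsplit by (rule arg_cong)
      also have "\<dots> = signature k (take (k - 1) w) @ map (\<lambda>(p,s). (p + length (take (k - 1) w), s)) (signature k (w ! (k - 1) # drop k w))"
        by (rule sig_append)
      finally show ?thesis .
    qed
    show ?thesis unfolding e s1 wk sig_cons Y(1) by simp
  qed
  then show "good (signature k (gcol i (Suc k) col))"
    unfolding w_def[symmetric] good_shift using Y(2) by auto
qed



definition tab_wf :: "nat list list \<Rightarrow> bool" where
  "tab_wf T = ((\<forall>col\<in>set T. sorted_wrt (<) col \<and> (\<forall>x\<in>set col. 1 \<le> x)) \<and>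
     (\<forall>p. Suc p < length T \<longrightarrow> length (T ! Suc p) \<le> length (T ! p) \<and>
        (\<forall>k<length (T ! Suc p). T ! p ! k \<le> T ! Suc p ! k)))"

definition stt :: "nat \<Rightarrow> nat \<Rightarrow> nat list list \<Rightarrow> nat list list" where
  "stt i c T = map (gcol i c) T"

lemma sig_Nil[simp]: "signature i [] = []" by (simp add: signature_def)

lemma good_concat: "\<forall>x\<in>set xs. good (signature k x) \<Longrightarrow> good (signature k (concat xs))"
  by (induction xs) (auto simp: sig_append good_shift intro!: good_append)

lemma len_filter_concat: "length (filter P (concat xs)) = sum_list (map (\<lambda>x. length (filter P x)) xs)"
  by (induction xs) auto

lemma prefix_fail:
  fixes i :: nat
  assumes w: "tab_wf T" and k: "1 \<le> k"
  defines "pr \<equiv> (\<lambda>col. k \<le> length col \<and> col ! (k - 1) \<le> i)"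
  assumes c: "col \<in> set (drop (length (takeWhile pr T)) T)"
  shows "\<not> pr col"
proof
  assume pc: "pr col"
  define P where "P = length (takeWhile pr T)"
  from c obtain q where q: "q < length T - P" "col = T ! (P + q)"
    unfolding P_def[symmetric] by (auto simp: in_set_conv_nth)
  have down: "P + d < length T \<Longrightarrow> pr (T ! (P + d)) \<Longrightarrow> pr (T ! P)" for d
  proof (induction d)
    case 0 then show ?case by simp
  next
    case (Suc d)
    have a: "Suc (P + d) < length T" using Suc.prems by simp
    have l: "length (T ! Suc (P + d)) \<le> length (T ! (P + d))"
      and r: "\<forall>k'<length (T ! Suc (P + d)). T ! (P + d) ! k' \<le> T ! Suc (P + d) ! k'"
      using w a unfolding tab_wf_def by blast+
    have pr1: "k \<le> length (T ! Suc (P + d))" "T ! Suc (P + d) ! (k - 1) \<le> i"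
      using Suc.prems(2) unfolding pr_def by simp_all
    have kk: "k - 1 < length (T ! Suc (P + d))" using pr1 k by simp
    have "pr (T ! (P + d))" unfolding pr_def
      using l pr1 r[rule_format, OF kk] k by auto
    then show ?case using Suc.IH a by simp
  qed
  have "pr (T ! P)" using down[of q] q pc by simp
  moreover have "P < length T" using q by simp
  ultimately show False using nth_length_takeWhile[of pr T] unfolding P_def by simp
qed

lemma block_step:
  assumes w: "tab_wf T" and k: "1 \<le> k" "k \<le> i"
  shows "\<exists>u v. read_word (stt i (Suc k) T) = u @ v \<and> k \<notin> set u \<and> good (signature k v)
    \<and> length (filter (\<lambda>x. x = Suc k) u) = bold_a T k i
    \<and> read_word (stt i k T) = map (\<lambda>x. if x = Suc k then k else x) u @ v"
proof -
  define pr where "pr = (\<lambda>col. k \<le> length col \<and> col ! (k - 1) \<le> i)"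
  define P where "P = length (takeWhile pr T)"
  define L where "L = take P T"
  define R where "R = drop P T"
  have T: "T = L @ R" unfolding L_def R_def by simp
  have srt: "sorted_wrt (<) col" if "col \<in> set T" for col using w that unfolding tab_wf_def by blast
  have Lp: "pr col" if "col \<in> set L" for col
    using that unfolding L_def P_def takeWhile_eq_take[symmetric] by (rule set_takeWhileD[THEN conjunct2])
  have Rp: "\<not> pr col" if "col \<in> set R" for col
    using prefix_fail[OF w k(1), of col i] that unfolding R_def P_def pr_def by simp
  have srtL: "sorted_wrt (<) col" if "col \<in> set L" for col using srt that T by auto
  have srtR: "sorted_wrt (<) col" if "col \<in> set R" for col using srt that T by auto
  define u where "u = concat (rev (map (gcol i (Suc k)) R))"
  define v where "v = concat (rev (map (gcol i (Suc k)) L))"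
  have cR: "k \<notin> set (gcol i (Suc k) col)"
    "length (filter (\<lambda>x. x = Suc k) (gcol i (Suc k) col)) = length (filter (\<lambda>x. x = i + 1) (take k col))"
    "map (\<lambda>x. if x = Suc k then k else x) (gcol i (Suc k) col) = gcol i k col"
    if "col \<in> set R" for col
    using colR[OF srtR[OF that] Rp[OF that, unfolded pr_def] k] by blast+
  have cL: "gcol i (Suc k) col = gcol i k col"
    "length (filter (\<lambda>x. x = i + 1) (take k col)) = 0"
    "good (signature k (gcol i (Suc k) col))"
    if "col \<in> set L" for col
    using colL[OF srtL[OF that] Lp[OF that, unfolded pr_def, THEN conjunct1]
        Lp[OF that, unfolded pr_def, THEN conjunct2] k] by blast+
  have r1: "read_word (stt i (Suc k) T) = u @ v"
    unfolding read_word_def stt_def u_def v_def T by simp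
  have r2: "k \<notin> set u" unfolding u_def using cR(1) by auto
  have r3: "good (signature k v)" unfolding v_def
    by (rule good_concat) (auto simp: cL(3))
  have "length (filter (\<lambda>x. x = Suc k) u) = sum_list (map (\<lambda>col. length (filter (\<lambda>x. x = i + 1) (take k col))) R)"
    unfolding u_def len_filter_concat rev_map[symmetric] sum_list_rev map_map o_def
    using cR(2) by (metis (no_types, lifting) map_eq_conv)
  moreover have "sum_list (map (\<lambda>col. length (filter (\<lambda>x. x = i + 1) (take k col))) L) = 0"
    using cL(2) by (simp add: sum_list_eq_0_iff)
  ultimately have r4: "length (filter (\<lambda>x. x = Suc k) u) = bold_a T k i"
    unfolding bold_a_def T by simp
  have "map (\<lambda>x. if x = Suc k then k else x) u = concat (rev (map (gcol i k) R))"
    unfolding u_def map_concat rev_map[symmetric] map_map o_def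
    using cR(3) by (metis (no_types, lifting) map_eq_conv)
  moreover have "v = concat (rev (map (gcol i k) L))"
    unfolding v_def using cL(1) by (metis (no_types, lifting) map_eq_conv)
  ultimately have r5: "read_word (stt i k T) = map (\<lambda>x. if x = Suc k then k else x) u @ v"
    unfolding read_word_def stt_def T by simp
  show ?thesis using r1 r2 r3 r4 r5 by blast
qed

lemma bzl_step:
  assumes w: "tab_wf T" and k: "1 \<le> k" "k \<le> i"
  shows "bzl_aux (k # rest) (stt i (Suc k) T) = bold_a T k i # bzl_aux rest (stt i k T)"
proof -
  obtain u v where uv: "read_word (stt i (Suc k) T) = u @ v" "k \<notin> set u" "good (signature k v)"
    "length (filter (\<lambda>x. x = Suc k) u) = bold_a T k i"
    "read_word (stt i k T) = map (\<lambda>x. if x = Suc k then k else x) u @ v"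
    using block_step[OF assms] by blast
  have ml: "map length (stt i k T) = map length (stt i (Suc k) T)" unfolding stt_def by simp
  note sa = step_abstract[OF uv(1,2,3) ml uv(5)]
  show ?thesis using sa uv(4) by (simp add: Let_def)
qed

lemma bzl_block:
  assumes w: "tab_wf T" "k \<le> i"
  shows "bzl_aux (rev [1..<Suc k] @ rest) (stt i (Suc k) T)
    = map (\<lambda>k'. bold_a T k' i) (rev [1..<Suc k]) @ bzl_aux rest (stt i 1 T)"
  using w(2)
proof (induction k)
  case 0 then show ?case by simp
next
  case (Suc k)
  have "rev [1..<Suc (Suc k)] @ rest = Suc k # (rev [1..<Suc k] @ rest)" by simp
  then show ?case using bzl_step[OF w(1), of "Suc k" i] Suc by simp
qed



lemma col_ge:
  assumes "sorted_wrt (<) col" "\<forall>x\<in>set col. 1 \<le> x" "p < length col"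
  shows "Suc p \<le> col ! p"
  using assms(3)
proof (induction p)
  case 0 then show ?case using assms(2) by (simp add: Suc_le_eq nth_mem)
next
  case (Suc p)
  have "col ! p < col ! Suc p" using sorted_wrt_nth_less[OF assms(1), of p "Suc p"] Suc.prems by simp
  then show ?case using Suc by simp
qed

lemma chain: assumes "tab_wf T" shows "stt i 1 T = stt (Suc i) (Suc (Suc i)) T"
proof -
  have "gcol i 1 col = gcol (Suc i) (Suc (Suc i)) col" if "col \<in> set T" for col
  proof (rule nth_equalityI)
    fix p assume "p < length (gcol i 1 col)"
    then have p: "p < length col" by simp
    have "Suc p \<le> col ! p" using col_ge[OF _ _ p] assms that unfolding tab_wf_def by blast
    then show "gcol i 1 col ! p = gcol (Suc i) (Suc (Suc i)) col ! p" using p by (auto simp: val_def)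
  qed simp
  then show ?thesis unfolding stt_def by simp
qed

lemma st0: assumes "tab_wf T" shows "stt 0 1 T = T"
proof -
  have "gcol 0 1 col = col" if "col \<in> set T" for col
  proof (rule nth_equalityI)
    fix p assume "p < length (gcol 0 1 col)"
    then have p: "p < length col" by simp
    have "Suc p \<le> col ! p" using col_ge[OF _ _ p] assms that unfolding tab_wf_def by blast
    then show "gcol 0 1 col ! p = col ! p" using p by (auto simp: val_def)
  qed simp
  then show ?thesis unfolding stt_def by (rule map_idI)
qed

definition F :: "nat list list \<Rightarrow> nat \<Rightarrow> nat list" where
  "F T i = map (\<lambda>k'. bold_a T k' i) (rev [1..<i+1])"

lemma bzl_blocks: assumes "tab_wf T"
  shows "bzl_aux (concat (map (\<lambda>k. rev [1..<k+1]) [1..<Suc n]) @ rest) T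
    = concat (map (F T) [1..<Suc n]) @ bzl_aux rest (stt n 1 T)"
proof (induction n arbitrary: rest)
  case 0 then show ?case using st0[OF assms] by simp
next
  case (Suc n)
  have "bzl_aux (concat (map (\<lambda>k. rev [1..<k+1]) [1..<Suc (Suc n)]) @ rest) T
     = bzl_aux (concat (map (\<lambda>k. rev [1..<k+1]) [1..<Suc n]) @ (rev [1..<Suc (Suc n)] @ rest)) T"
    by simp
  also have "\<dots> = concat (map (F T) [1..<Suc n]) @ bzl_aux (rev [1..<Suc (Suc n)] @ rest) (stt (Suc n) (Suc (Suc n)) T)"
    using Suc.IH chain[OF assms, of n] by simp
  also have "\<dots> = concat (map (F T) [1..<Suc n]) @ F T (Suc n) @ bzl_aux rest (stt (Suc n) 1 T)"
    using bzl_block[OF assms, of "Suc n" "Suc n" rest] unfolding F_def by simp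
  finally show ?case by simp
qed

lemma bzl_aux_append: "bzl_aux (xs @ ys) S = bzl_aux xs S @ bzl_aux ys (fold (\<lambda>i S. the (e_pow i (eps i S) S)) xs S)"
  by (induction xs arbitrary: S) (auto simp: Let_def)

lemma bzl_eq: assumes "tab_wf T" shows "bzl r T = concat (map (F T) [1..<Suc r])"
  using bzl_blocks[OF assms, of r "[]"] unfolding bzl_def long_word_def by simp

lemma lenF: "2 * length (concat (map (F T) [1..<i])) = i * (i - 1)"
proof (induction i)
  case 0 then show ?case by simp
next
  case (Suc i)
  have "length (concat (map (F T) [1..<Suc i])) = length (concat (map (F T) [1..<i])) + (if 1 \<le> i then i else 0)"
    by (simp add: F_def)
  then show ?case using Suc.IH by (cases i) (auto simp: algebra_simps)
qed

lemma entry: assumes "tab_wf T" "1 \<le> j" "j \<le> i" "i \<le> r"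
  shows "bzl_entry r T i j = bold_a T (i - j + 1) i"
proof -
  have sp: "[1..<Suc r] = [1..<i] @ i # [Suc i..<Suc r]"
    using assms upt_add_eq_append[of 1 i "Suc r - i"] by (simp add: upt_rec[of i])
  define A where "A = concat (map (F T) [1..<i])"
  have lA: "i * (i - 1) div 2 = length A" using lenF[of T i] unfolding A_def by simp
  have idx: "i * (i - 1) div 2 + j - 1 = length A + (j - 1)" using lA assms by simp
  have jl: "j - 1 < length (F T i)" using assms by (simp add: F_def)
  have "bzl r T ! (i * (i - 1) div 2 + j - 1) = F T i ! (j - 1)"
    unfolding bzl_eq[OF assms(1)] sp idx A_def using jl by (simp add: nth_append)
  also have "\<dots> = bold_a T (i - j + 1) i"
  proof -
    have "rev [1..<i+1] ! (j - 1) = i - j + 1" using assms by (simp add: rev_nth del: upt_Suc)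
    then show ?thesis using jl unfolding F_def by simp
  qed
  finally show ?thesis unfolding bzl_entry_def .
qed



lemma ch_Suc: "col_heights (Suc r) m = replicate (m (Suc r)) (Suc r) @ col_heights r m"
  unfolding col_heights_def by simp

lemma ch_set: "x \<in> set (col_heights r m) \<Longrightarrow> x \<le> r"
  unfolding col_heights_def by auto

lemma sorted_rep: "sorted_wrt (\<ge>) (replicate n (x::nat))"
  by (induction n) auto

lemma ch_sorted: "sorted_wrt (\<ge>) (col_heights r m)"
proof (induction r)
  case 0 then show ?case by (simp add: col_heights_def)
next
  case (Suc r)
  show ?case unfolding ch_Suc sorted_wrt_append
    using Suc sorted_rep ch_set[of _ r m] by fastforce
qed

lemma ssyt_wf: assumes "T \<in> SSYT r m" shows "tab_wf T"
proof -
  have ml: "map length T = col_heights r m" and e: "\<forall>c\<in>set T. \<forall>x\<in>set c. 1 \<le> x \<and> x \<le> r + 1"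
    and s: "\<forall>c\<in>set T. sorted_wrt (<) c"
    and rw: "\<forall>p. Suc p < length T \<longrightarrow> (\<forall>k < length (T ! Suc p). T ! p ! k \<le> T ! Suc p ! k)"
    using assms unfolding SSYT_def by blast+
  have len: "length (T ! Suc p) \<le> length (T ! p)" if "Suc p < length T" for p
  proof -
    have "length (col_heights r m) = length T" using ml[symmetric] by simp
    then have "col_heights r m ! Suc p \<le> col_heights r m ! p"
      using sorted_wrt_nth_less[OF ch_sorted, of p "Suc p" r m] that by simp
    then show ?thesis using ml that by (metis Suc_lessD nth_map)
  qed
  show ?thesis unfolding tab_wf_def using e s rw len by blast
qed

theorem mainTheorem2:
  fixes r :: nat and l :: "nat \<Rightarrow> nat" and T :: "nat list list" and i j :: nat
  assumes "1 \<le> r"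
    and "T \<in> SSYT r (\<lambda>k. l k + 1)"
    and "1 \<le> j" and "j \<le> i" and "i \<le> r"
  shows "circled_CI r T i j \<longleftrightarrow> circled_CII T (i - j + 1) i"
proof -
  have w: "tab_wf T" using ssyt_wf[OF assms(2)] .
  have e1: "bzl_entry r T i j = bold_a T (i - j + 1) i" using entry[OF w assms(3,4,5)] .
  show ?thesis
  proof (cases "j = i")
    case True
    have "bold_a T 0 i = 0" unfolding bold_a_def by (simp add: sum_list_eq_0_iff)
    then show ?thesis unfolding circled_CI_def circled_CII_def e1 using True by simp
  next
    case False
    have e2: "bzl_entry r T i (j + 1) = bold_a T (i - (j + 1) + 1) i"
      using entry[OF w _ _ assms(5)] assms False by simp
    have "i - (j + 1) + 1 = i - j + 1 - 1" using assms False by simp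
    then show ?thesis unfolding circled_CI_def circled_CII_def e1 e2 using False by simp
  qed
qed

end
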